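(* Let $L$ be a compact convex subset of $\mathbb{R}^n$, and let $Q$ be a polytope in $\mathbb{R}^n$ having at most $n$ vertices. If for every unit vector $u$ the projection $L_u$ contains a translate of $Q_u$, then $L$ contains a translate of $Q$.
   Context: For a unit vector $u$ and a set $S\subseteq\mathbb{R}^n$, $S_u$ denotes the orthogonal projection of $S$ onto the hyperplane $u^\perp$. *)

theory Defs
  imports "HOL-Analysis.Analysis"
begin

definition proj_hyp :: "'a::euclidean_space \<Rightarrow> 'a set \<Rightarrow> 'a set" where
  "proj_hyp u S = (\<lambda>x. x - (x \<bullet> u) *\<^sub>R u) ` S"

end

theory Submission imports Defs begin

lemma infdist_closest:
  fixes A :: "'a::euclidean_space set"
  assumes "p \<in> A" "\<forall>y\<in>A. dist x p \<le> dist x y"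
  shows "infdist x A = dist x p"
proof (rule antisym)
  show "infdist x A \<le> dist x p" using assms infdist_le by blast
  have "A \<noteq> {}" using assms by auto
  then show "dist x p \<le> infdist x A"
    unfolding infdist_notempty[OF \<open>A \<noteq> {}\<close>] using assms by (auto intro: cINF_greatest)
qed

lemma key:
  fixes A :: "'b \<Rightarrow> 'a::euclidean_space set"
  assumes V: "finite V" "V \<noteq> {}" "card V \<le> DIM('a)"
    and A: "\<And>v. v \<in> V \<Longrightarrow> compact (A v) \<and> convex (A v) \<and> A v \<noteq> {}"
    and H: "\<And>u. norm u = 1 \<Longrightarrow> \<exists>t. \<forall>v\<in>V. \<exists>y\<in>A v. y - (y \<bullet> u) *\<^sub>R u = t"
  shows "\<exists>x. \<forall>v\<in>V. x \<in> A v"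
proof (rule ccontr)
  assume nx: "\<not> ?thesis"
  define k where "k = card V"
  have kpos: "k > 0" using V k_def by (simp add: card_gt_0_iff)
  define g where "g x = (\<Sum>v\<in>V. (infdist x (A v))^2)" for x
  define K where "K = convex hull (\<Union>v\<in>V. A v)"
  have "compact (\<Union>v\<in>V. A v)" using A V by (intro compact_UN) auto
  hence cK: "compact K" unfolding K_def by (rule compact_convex_hull)
  have "K \<noteq> {}" unfolding K_def using A V by auto
  moreover have "continuous_on K g" unfolding g_def by (intro continuous_intros)
  ultimately obtain x0 where x0: "x0 \<in> K" "\<And>y. y \<in> K \<Longrightarrow> g x0 \<le> g y"
    using continuous_attains_inf[OF cK] by blast
  have ex_p: "\<forall>v\<in>V. \<exists>p. p \<in> A v \<and> (\<forall>y\<in>A v. dist x0 p \<le> dist x0 y)"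
  proof
    fix v assume "v \<in> V"
    then have cl: "closed (A v)" and ne: "A v \<noteq> {}" using A compact_imp_closed by auto
    obtain q where "q \<in> A v" "\<And>y. y \<in> A v \<Longrightarrow> dist x0 q \<le> dist x0 y"
      using distance_attains_inf[OF cl ne, of x0] by blast
    then show "\<exists>p. p \<in> A v \<and> (\<forall>y\<in>A v. dist x0 p \<le> dist x0 y)" by blast
  qed
  obtain p where p: "\<And>v. v \<in> V \<Longrightarrow> p v \<in> A v \<and> (\<forall>y\<in>A v. dist x0 (p v) \<le> dist x0 y)"
    using bchoice[OF ex_p] by blast
  have gx0: "g x0 = (\<Sum>v\<in>V. (norm (x0 - p v))^2)"
    unfolding g_def using p by (intro sum.cong refl) (metis infdist_closest dist_norm)
  define c where "c = (1 / real k) *\<^sub>R (\<Sum>v\<in>V. p v)"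
  have "c \<in> K"
  proof -
    have "(\<Sum>v\<in>V. (1 / real k) *\<^sub>R p v) \<in> K"
      unfolding K_def using V p kpos k_def
      by (intro convex_sum) (auto intro!: hull_inc)
    thus ?thesis unfolding c_def by (simp add: scaleR_sum_right)
  qed
  have sumc: "(\<Sum>v\<in>V. c - p v) = 0"
    using kpos unfolding c_def k_def by (simp add: sum_subtractf sum_constant_scaleR)
  have "g c \<le> (\<Sum>v\<in>V. (norm (c - p v))^2)"
    unfolding g_def using p
    by (intro sum_mono power_mono) (auto simp: infdist_nonneg dist_norm intro: infdist_le[of "p _", simplified dist_norm])
  have ident: "(\<Sum>v\<in>V. (norm (x0 - p v))^2) = real k * (norm (x0 - c))^2 + (\<Sum>v\<in>V. (norm (c - p v))^2)"
  proof -
    have "(\<Sum>v\<in>V. (norm (x0 - p v))^2) = (\<Sum>v\<in>V. (norm (x0 - c))^2 + 2 * ((x0 - c) \<bullet> (c - p v)) + (norm (c - p v))^2)"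
      proof (intro sum.cong refl)
      fix v
      have e: "x0 - p v = (x0 - c) + (c - p v)" by simp
      show "(norm (x0 - p v))^2 = (norm (x0 - c))^2 + 2 * ((x0 - c) \<bullet> (c - p v)) + (norm (c - p v))^2"
        by (subst e) (simp only: power2_norm_eq_inner inner_add_left inner_add_right inner_commute[of "c - p v" "x0 - c"] mult_2)
    qed
    also have "\<dots> = real k * (norm (x0 - c))^2 + 2 * ((x0 - c) \<bullet> (\<Sum>v\<in>V. c - p v)) + (\<Sum>v\<in>V. (norm (c - p v))^2)"
      by (simp add: sum.distrib k_def inner_sum_right sum_distrib_left)
    finally show ?thesis using sumc by simp
  qed
  have "x0 = c"
  proof -
    have "g x0 \<le> g c" using x0 \<open>c \<in> K\<close> by blast
    with ident gx0 \<open>g c \<le> _\<close> have "real k * (norm (x0 - c))^2 \<le> 0" by linarith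
    with kpos have "norm (x0 - c) = 0"
    proof -
      have "(norm (x0 - c))^2 \<le> 0"
        using kpos \<open>real k * (norm (x0 - c))^2 \<le> 0\<close> by (simp add: mult_le_0_iff)
      then show ?thesis by simp
    qed
    thus ?thesis by simp
  qed
  define w where "w v = x0 - p v" for v
  have sumw: "(\<Sum>v\<in>V. w v) = 0" using sumc \<open>x0 = c\<close> w_def by simp
  have wdot: "\<And>v y. v \<in> V \<Longrightarrow> y \<in> A v \<Longrightarrow> w v \<bullet> y \<le> w v \<bullet> p v"
  proof -
    fix v y assume "v \<in> V" "y \<in> A v"
    then have "(x0 - p v) \<bullet> (y - p v) \<le> 0"
      using A p by (intro any_closest_point_dot) (auto intro: compact_imp_closed)
    thus "w v \<bullet> y \<le> w v \<bullet> p v" unfolding w_def by (simp add: inner_diff_right)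
  qed
  obtain v1 where "v1 \<in> V" "w v1 \<noteq> 0"
  proof (rule ccontr)
    assume "\<not> thesis"
    then have "\<forall>v\<in>V. w v = 0" using that by blast
    then have "\<forall>v\<in>V. x0 \<in> A v" using p w_def by auto
    with nx show False by blast
  qed
  have possq: "(\<Sum>v\<in>V. w v \<bullet> w v) > 0"
  proof -
    have "(\<Sum>v\<in>V. w v \<bullet> w v) \<ge> w v1 \<bullet> w v1"
      using V \<open>v1 \<in> V\<close> by (intro member_le_sum) auto
    moreover have "w v1 \<bullet> w v1 > 0" using \<open>w v1 \<noteq> 0\<close> by simp
    ultimately show ?thesis by linarith
  qed
  obtain v0 where v0: "v0 \<in> V" using V by auto
  define S where "S = w ` (V - {v0})"
  have "dim S \<le> card (V - {v0})"
    unfolding S_def using V by (intro order.trans[OF dim_le_card[OF span_superset]]) (auto intro: card_image_le)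
  also have "\<dots> < DIM('a)" using V v0 kpos k_def by auto
  finally obtain u0 where u0: "u0 \<noteq> 0" "\<And>y. y \<in> span S \<Longrightarrow> orthogonal u0 y"
    using orthogonal_to_subspace_exists by blast
  have wv0: "w v0 \<in> span S"
  proof -
    have "w v0 = - (\<Sum>v\<in>V - {v0}. w v)" using sumw sum.remove[OF V(1) v0, of w] by (simp add: eq_neg_iff_add_eq_0)
    moreover have "(\<Sum>v\<in>V - {v0}. w v) \<in> span S" unfolding S_def
      by (intro span_sum) (auto intro: span_base)
    ultimately show ?thesis by (simp add: span_neg)
  qed
  have orth: "\<And>v. v \<in> V \<Longrightarrow> w v \<bullet> u0 = 0"
  proof -
    fix v assume "v \<in> V"
    then have "w v \<in> span S"
      using wv0 by (cases "v = v0") (auto simp: S_def intro: span_base)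
    then show "w v \<bullet> u0 = 0" using u0 by (metis orthogonal_def inner_commute)
  qed
  define u where "u = (1 / norm u0) *\<^sub>R u0"
  have "norm u = 1" using u0 unfolding u_def by simp
  then obtain t where ex_y: "\<forall>v\<in>V. \<exists>y\<in>A v. y - (y \<bullet> u) *\<^sub>R u = t" using H by blast
  have ex_y2: "\<forall>v\<in>V. \<exists>y. y \<in> A v \<and> y - (y \<bullet> u) *\<^sub>R u = t" using ex_y by blast
  obtain y where y: "\<And>v. v \<in> V \<Longrightarrow> y v \<in> A v \<and> y v - (y v \<bullet> u) *\<^sub>R u = t"
    using bchoice[OF ex_y2] by blast
  have orthu: "\<And>v. v \<in> V \<Longrightarrow> w v \<bullet> u = 0" using orth unfolding u_def by simp
  have wy: "\<And>v. v \<in> V \<Longrightarrow> w v \<bullet> y v = w v \<bullet> t"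
  proof -
    fix v assume v: "v \<in> V"
    have "w v \<bullet> t = w v \<bullet> (y v - (y v \<bullet> u) *\<^sub>R u)" using y v by simp
    also have "\<dots> = w v \<bullet> y v" using orthu[OF v] by (simp add: inner_diff_right)
    finally show "w v \<bullet> y v = w v \<bullet> t" by simp
  qed
  have "0 = (\<Sum>v\<in>V. w v) \<bullet> t" using sumw by simp
  also have "\<dots> = (\<Sum>v\<in>V. w v \<bullet> y v)" using wy by (simp add: inner_sum_left)
  also have "\<dots> \<le> (\<Sum>v\<in>V. w v \<bullet> p v)" using wdot y by (intro sum_mono) auto
  also have "\<dots> = (\<Sum>v\<in>V. w v \<bullet> x0 - w v \<bullet> w v)"
    unfolding w_def by (intro sum.cong refl) (simp add: inner_diff_right)
  also have "\<dots> = (\<Sum>v\<in>V. w v) \<bullet> x0 - (\<Sum>v\<in>V. w v \<bullet> w v)"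
    by (simp add: sum_subtractf inner_sum_left)
  also have "\<dots> < 0" using sumw possq by simp
  finally show False by (meson less_irrefl)
qed


theorem lemma2p5:
  fixes L Q :: "'a::euclidean_space set"
  assumes "compact L" and "convex L"
    and "polytope Q"
    and "card {v. v extreme_point_of Q} \<le> DIM('a)"
    and "\<And>u. norm u = 1 \<Longrightarrow> \<exists>t. (\<lambda>x. t + x) ` proj_hyp u Q \<subseteq> proj_hyp u L"
  shows "\<exists>t. (\<lambda>x. t + x) ` Q \<subseteq> L"
proof (cases "Q = {}")
  case True then show ?thesis by auto
next
  case Qne: False
  define V where "V = {v. v extreme_point_of Q}"
  have QV: "Q = convex hull V" unfolding V_def
    using assms(3) by (intro Krein_Milman_Minkowski polytope_imp_compact polytope_imp_convex)
  obtain P where P: "finite P" "Q = convex hull P" using assms(3) unfolding polytope_def by blast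
  have "V \<subseteq> P" unfolding V_def using P extreme_point_of_convex_hull by blast
  hence finV: "finite V" using P finite_subset by blast
  have Vne: "V \<noteq> {}"
  proof
    assume "V = {}"
    then have "Q = {}" using QV by (simp only: convex_hull_empty)
    with Qne show False by (rule notE)
  qed
  have VQ: "V \<subseteq> Q" using hull_subset[of V convex] QV by (simp only:)
  have Lne: "L \<noteq> {}"
  proof
    assume "L = {}"
    obtain b :: 'a where "b \<in> Basis" using nonempty_Basis by blast
    then have "norm b = 1" by simp
    then obtain t where "(\<lambda>x. t + x) ` proj_hyp b Q \<subseteq> proj_hyp b L" using assms(5) by blast
    moreover have "proj_hyp b Q \<noteq> {}" using Qne unfolding proj_hyp_def by blast
    moreover have "proj_hyp b L = {}" using \<open>L = {}\<close> unfolding proj_hyp_def by simp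
    ultimately show False by blast
  qed
  define A where "A v = (\<lambda>x. x - v) ` L" for v
  have "\<exists>x. \<forall>v\<in>V. x \<in> A v"
  proof (rule key[OF finV Vne])
    show "card V \<le> DIM('a)" using assms(4) V_def by simp
    show "\<And>v. v \<in> V \<Longrightarrow> compact (A v) \<and> convex (A v) \<and> A v \<noteq> {}"
    proof -
      fix v
      have "compact (A v)" unfolding A_def using assms(1) by (rule compact_translation_subtract)
      moreover have "convex (A v)" unfolding A_def using assms(2) by (rule convex_translation_subtract)
      moreover have "A v \<noteq> {}" unfolding A_def using Lne by simp
      ultimately show "compact (A v) \<and> convex (A v) \<and> A v \<noteq> {}" by blast
    qed
    fix u :: 'a assume "norm u = 1"
    then obtain t where t: "(\<lambda>x. t + x) ` proj_hyp u Q \<subseteq> proj_hyp u L" using assms(5) by blast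
    show "\<exists>t. \<forall>v\<in>V. \<exists>y\<in>A v. y - (y \<bullet> u) *\<^sub>R u = t"
    proof (intro exI ballI)
      fix v assume "v \<in> V"
      then have "v \<in> Q" using VQ by blast
      then have "v - (v \<bullet> u) *\<^sub>R u \<in> proj_hyp u Q" unfolding proj_hyp_def by (rule imageI)
      then have "t + (v - (v \<bullet> u) *\<^sub>R u) \<in> (\<lambda>x. t + x) ` proj_hyp u Q" by (rule imageI)
      then have "t + (v - (v \<bullet> u) *\<^sub>R u) \<in> proj_hyp u L" using t by (rule subsetD[rotated])
      then obtain l where l: "l \<in> L" "t + (v - (v \<bullet> u) *\<^sub>R u) = l - (l \<bullet> u) *\<^sub>R u"
        unfolding proj_hyp_def by (rule imageE) simp
      show "\<exists>y\<in>A v. y - (y \<bullet> u) *\<^sub>R u = t"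
      proof (intro bexI)
        show "l - v \<in> A v" unfolding A_def using l by auto
        show "(l - v) - ((l - v) \<bullet> u) *\<^sub>R u = t"
          using l(2) by (simp add: inner_diff_left algebra_simps)
      qed
    qed
  qed
  then obtain x where x: "\<And>v. v \<in> V \<Longrightarrow> x \<in> A v" by blast
  have "(\<lambda>q. x + q) ` V \<subseteq> L"
  proof
    fix z assume "z \<in> (\<lambda>q. x + q) ` V"
    then obtain v where "v \<in> V" "z = x + v" by blast
    from x[OF \<open>v \<in> V\<close>] obtain l where "l \<in> L" "x = l - v" unfolding A_def by (rule imageE)
    with \<open>z = x + v\<close> show "z \<in> L" by simp
  qed
  then have "convex hull ((\<lambda>q. x + q) ` V) \<subseteq> L" using assms(2) by (intro hull_minimal)
  then have "(\<lambda>q. x + q) ` Q \<subseteq> L" by (simp add: QV convex_hull_translation)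
  then show ?thesis by blast
qed

end
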